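(* Let $a,d\in\mathbb N$ and let $\chi\in M(d)_\mathbb{R}$ be strictly dominant with $\chi\in\mathbf{V}^a(1,d)$. Then there exist real numbers $c_{ij}$ ($1\le j<i\le d$) and $c_i$ ($1\le i\le d$) with \[ \chi=\sum_{1\le j<i\le d}c_{ij}(\beta_i-\beta_j)+\sum_{i=1}^dc_i\beta_i,\qquad 0\le c_{ij}\le\tfrac32,\quad -\tfrac{a+2}{2}\le c_i\le\tfrac a2. \]
   Context: $T(d)\subset GL(d)$ diagonal torus with character lattice $M(d)$ having coordinate characters $\beta_1,\dots,\beta_d$; $M(d)_\mathbb R=M(d)\otimes\mathbb R$. $\chi=\sum b_i\beta_i$ is strictly dominant if $b_1<\cdots<b_d$. $\mathbf{V}^a(1,d):=\frac32\,\mathrm{sum}[0,\beta_i-\beta_j]+\frac a2\,\mathrm{sum}[-\beta_k,\beta_k]+\mathrm{sum}[-\beta_k,0]$, Minkowski sums of segments over all $1\le i,j\le d$ and all $1\le k\le d$. *)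

theory Defs
  imports Complex_Main
begin

text \<open>Elements of M(d)_R are represented as coefficient functions nat => real;
  a vector is sum_k b k * beta_k with coordinates indexed 1..d.\<close>

type_synonym charvec = "nat \<Rightarrow> real"

definition beta :: "nat \<Rightarrow> charvec" where
  "beta i = (\<lambda>k. if k = i then 1 else 0)"

definition seg :: "charvec \<Rightarrow> charvec \<Rightarrow> charvec set" where
  "seg p q = {(\<lambda>k. (1 - t) * p k + t * q k) | t. 0 \<le> t \<and> t \<le> 1}"

definition vscale :: "real \<Rightarrow> charvec set \<Rightarrow> charvec set" where
  "vscale c S = (\<lambda>v k. c * v k) ` S"

definition vplus :: "charvec set \<Rightarrow> charvec set \<Rightarrow> charvec set" where
  "vplus A B = {(\<lambda>k. x k + y k) | x y. x \<in> A \<and> y \<in> B}"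

definition msum :: "'i set \<Rightarrow> ('i \<Rightarrow> charvec set) \<Rightarrow> charvec set" where
  "msum I S = {(\<lambda>k. \<Sum>i\<in>I. x i k) | x. \<forall>i\<in>I. x i \<in> S i}"

definition V :: "nat \<Rightarrow> nat \<Rightarrow> charvec set" where
  "V a d = vplus
     (vplus (vscale (3/2) (msum ({1..d} \<times> {1..d})
                (\<lambda>(i,j). seg (\<lambda>_. 0) (\<lambda>k. beta i k - beta j k))))
            (vscale (real a / 2) (msum {1..d} (\<lambda>k. seg (\<lambda>m. - beta k m) (beta k)))))
     (msum {1..d} (\<lambda>k. seg (\<lambda>m. - beta k m) (\<lambda>_. 0)))"

definition strictly_dominant :: "nat \<Rightarrow> charvec \<Rightarrow> bool" where
  "strictly_dominant d \<chi> \<longleftrightarrow> (\<forall>i j. 1 \<le> i \<and> i < j \<and> j \<le> d \<longrightarrow> \<chi> i < \<chi> j)"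

end

theory Submission
  imports Defs
begin

lemma block_top:
  fixes n s :: nat
  assumes up: "\<forall>i j. 1 \<le> i \<longrightarrow> Q i \<longrightarrow> i \<le> j \<longrightarrow> j \<le> n \<longrightarrow> Q j" and "s \<le> n"
  shows "\<exists>p\<le>s. (\<forall>k. n - p < k \<and> k \<le> n \<longrightarrow> Q k) \<and> (\<forall>k. n - s < k \<and> k \<le> n - p \<longrightarrow> \<not> Q k)"
  using \<open>s \<le> n\<close>
proof (induction s)
  case 0 then show ?case by (intro exI[of _ 0]) auto
next
  case (Suc s)
  then obtain p where p: "p \<le> s" "\<forall>k. n-p<k \<and> k\<le>n \<longrightarrow> Q k" "\<forall>k. n-s<k \<and> k\<le>n-p \<longrightarrow> \<not>Q k" by auto
  show ?case
  proof (cases "Q (n - s)")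
    case True
    have "\<forall>k. n - Suc s < k \<and> k \<le> n \<longrightarrow> Q k"
    proof (intro allI impI)
      fix k assume "n - Suc s < k \<and> k \<le> n"
      then have "n - s \<le> k" "k \<le> n" using Suc.prems by auto
      moreover have "1 \<le> n - s" using Suc.prems by auto
      ultimately show "Q k" using up True by blast
    qed
    then show ?thesis by (intro exI[of _ "Suc s"]) auto
  next
    case False
    have "\<forall>k. n - Suc s < k \<and> k \<le> n - p \<longrightarrow> \<not> Q k"
    proof (intro allI impI)
      fix k assume k: "n - Suc s < k \<and> k \<le> n - p"
      show "\<not> Q k"
      proof (cases "k = n - s")
        case True then show ?thesis using False by simp
      next
        case False then have "n - s < k" using k Suc.prems by auto
        then show ?thesis using p(3) k by auto
      qed
    qed
    then show ?thesis using p by (intro exI[of _ p]) auto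
  qed
qed

lemma block_bot:
  fixes m :: nat
  assumes down: "\<forall>i j. 1 \<le> i \<longrightarrow> i \<le> j \<longrightarrow> j \<le> m \<longrightarrow> Q j \<longrightarrow> Q i"
  shows "\<exists>q\<le>m. (\<forall>k. 1 \<le> k \<and> k \<le> q \<longrightarrow> Q k) \<and> (\<forall>k. q < k \<and> k \<le> m \<longrightarrow> \<not> Q k)"
  using down
proof (induction m)
  case 0 then show ?case by auto
next
  case (Suc m)
  have d: "\<forall>i j. 1 \<le> i \<longrightarrow> i \<le> j \<longrightarrow> j \<le> m \<longrightarrow> Q j \<longrightarrow> Q i" using Suc.prems by auto
  obtain q where q: "q \<le> m" "\<forall>k. 1 \<le> k \<and> k \<le> q \<longrightarrow> Q k" "\<forall>k. q < k \<and> k \<le> m \<longrightarrow> \<not> Q k"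
    using Suc.IH[OF d] by auto
  show ?case
  proof (cases "Q (Suc m)")
    case True
    then show ?thesis using Suc.prems by (intro exI[of _ "Suc m"]) auto
  next
    case False
    then show ?thesis using q by (intro exI[of _ q]) (auto simp: le_Suc_eq)
  qed
qed

lemma split_gAM:
  fixes f :: "nat \<Rightarrow> real"
  assumes "a \<le> b" "b \<le> c"
  shows "sum f {a<..c} = sum f {a<..b} + sum f {b<..c}"
proof -
  have e: "{a<..c} = {a<..b} \<union> {b<..c}" using assms by auto
  have "sum f ({a<..b} \<union> {b<..c}) = sum f {a<..b} + sum f {b<..c}"
    by (rule sum.union_disjoint) auto
  then show ?thesis using e by simp
qed

lemma split_1AM:
  fixes f :: "nat \<Rightarrow> real"
  assumes "b \<le> c"
  shows "sum f {1..c} = sum f {1..b} + sum f {b<..c}"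
proof -
  have e: "{1..c} = {1..b} \<union> {b<..c}" using assms by auto
  have "sum f ({1..b} \<union> {b<..c}) = sum f {1..b} + sum f {b<..c}"
    by (rule sum.union_disjoint) auto
  then show ?thesis using e by simp
qed

lemma arith1:
  fixes T X Y t \<kappa> :: real and p q s d :: nat
  assumes "p \<le> s" "q \<le> d - s" "s \<le> d" "\<kappa> \<ge> 0"
    "T \<le> X + real (s - p) * t" "T \<le> Y - real (d - s - q) * t"
    "X \<le> \<kappa> * real p * real (d - p)" "Y \<le> \<kappa> * real q * real (d - q)"
  shows "T \<le> \<kappa> * real s * real (d - s)"
proof -
  define \<alpha> where "\<alpha> = real (d - s - q)"
  define \<beta> where "\<beta> = real (s - p)"
  have ab: "\<alpha> \<ge> 0" "\<beta> \<ge> 0" unfolding \<alpha>_def \<beta>_def by auto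
  have s_eq: "real s = real p + \<beta>" using assms unfolding \<beta>_def by (simp add: of_nat_diff)
  have dp: "real (d - p) = real q + \<alpha> + \<beta>" using assms unfolding \<alpha>_def \<beta>_def by (simp add: of_nat_diff)
  have dq: "real (d - q) = real p + \<alpha> + \<beta>" using assms unfolding \<alpha>_def \<beta>_def by (simp add: of_nat_diff)
  have ds: "real (d - s) = real q + \<alpha>" using assms unfolding \<alpha>_def by (simp add: of_nat_diff)
  show ?thesis
  proof (cases "\<alpha> + \<beta> = 0")
    case True
    then have "\<alpha> = 0" "\<beta> = 0" using ab by auto
    then show ?thesis using assms(5,7) s_eq dp ds by simp
  next
    case False
    then have pos: "\<alpha> + \<beta> > 0" using ab by auto
    have "(\<alpha> + \<beta>) * T = \<alpha> * T + \<beta> * T" by (simp add: algebra_simps)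
    also have "\<dots> \<le> \<alpha> * (X + \<beta> * t) + \<beta> * (Y - \<alpha> * t)"
      using assms(5,6) ab unfolding \<alpha>_def[symmetric] \<beta>_def[symmetric]
      by (intro add_mono mult_left_mono) auto
    also have "\<dots> = \<alpha> * X + \<beta> * Y" by (simp add: algebra_simps)
    also have "\<dots> \<le> \<alpha> * (\<kappa> * real p * real (d - p)) + \<beta> * (\<kappa> * real q * real (d - q))"
      using assms(7,8) ab by (intro add_mono mult_left_mono) auto
    also have "\<dots> = (\<alpha> + \<beta>) * (\<kappa> * real s * real (d - s)) - \<kappa> * \<alpha> * \<beta> * (\<alpha> + \<beta>)"
      unfolding s_eq dp dq ds by (simp add: algebra_simps)
    also have "\<dots> \<le> (\<alpha> + \<beta>) * (\<kappa> * real s * real (d - s))"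
      using ab assms(4) by (simp add: mult_nonneg_nonneg)
    finally show ?thesis using pos by simp
  qed
qed

lemma arith2:
  fixes T A F B0 h \<kappa> :: real and p q s n :: nat
  assumes "p \<le> s" "q \<le> n - s" "s \<le> n" "\<kappa> \<ge> 0"
    "T \<le> A + real (s - p) * h" "T \<le> B0 - real q * \<kappa> - real (n - s - q) * h"
    "A + F \<le> \<kappa> * real (p+1) * real (n - p)" "A \<le> real p * F"
    "B0 \<le> \<kappa> * real (Suc n - q) * real q" "real q * \<kappa> \<le> F"
  shows "T \<le> \<kappa> * real s * real (n - s)"
proof -
  define \<alpha> where "\<alpha> = real (n - s - q)"
  define \<beta> where "\<beta> = real (s - p)"
  have ab: "\<alpha> \<ge> 0" "\<beta> \<ge> 0" unfolding \<alpha>_def \<beta>_def by auto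
  have s_eq: "real s = real p + \<beta>" using assms unfolding \<beta>_def by (simp add: of_nat_diff)
  have np: "real (n - p) = real q + \<alpha> + \<beta>" using assms unfolding \<alpha>_def \<beta>_def by (simp add: of_nat_diff)
  have nq: "real (Suc n - q) = real p + \<alpha> + \<beta> + 1" using assms unfolding \<alpha>_def \<beta>_def by (simp add: of_nat_diff)
  have ns: "real (n - s) = real q + \<alpha>" using assms unfolding \<alpha>_def by (simp add: of_nat_diff)
  show ?thesis
  proof (cases "\<beta> = 0")
    case True
    then have ps: "p = s" using assms(1) unfolding \<beta>_def by simp
    have TA: "T \<le> A" using assms(5) True unfolding \<beta>_def by simp
    show ?thesis
    proof (cases "\<kappa> * real (n - s) \<le> F")
      case True
      have "A + F \<le> \<kappa> * real (s+1) * real (n - s)" using assms(7) ps by simp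
      then have "A \<le> \<kappa> * real (s+1) * real (n - s) - F" by linarith
      also have "\<dots> = \<kappa> * real s * real (n - s) + (\<kappa> * real (n - s) - F)" by (simp add: algebra_simps)
      also have "\<dots> \<le> \<kappa> * real s * real (n - s)" using True by linarith
      finally show ?thesis using TA by simp
    next
      case False
      have "A \<le> real s * F" using assms(8) ps by simp
      also have "\<dots> \<le> real s * (\<kappa> * real (n - s))" using False by (intro mult_left_mono) auto
      finally show ?thesis using TA by (simp add: algebra_simps)
    qed
  next
    case bne: False
    then have b1: "\<beta> \<ge> 1" unfolding \<beta>_def by simp
    show ?thesis
    proof (cases "\<alpha> = 0")
      case True
      then have qe: "q = n - s" using assms(2) unfolding \<alpha>_def by simp
      have nq2: "real (Suc n - q) = real s + 1" using qe assms(3) by (simp add: of_nat_diff)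
      have "T \<le> B0 - real q * \<kappa>" using assms(6) qe by simp
      also have "\<dots> \<le> \<kappa> * (real s + 1) * real q - real q * \<kappa>" using assms(9) nq2 by simp
      also have "\<dots> = \<kappa> * real s * real q" by (simp add: algebra_simps)
      finally show ?thesis using qe by simp
    next
      case False
      then have pos: "\<alpha> + \<beta> > 0" using ab by auto
      have AF: "A \<le> \<kappa> * real (p+1) * real (n - p) - real q * \<kappa>" using assms(7,10) by simp
      have "(\<alpha> + \<beta>) * T = \<alpha> * T + \<beta> * T" by (simp add: algebra_simps)
      also have "\<dots> \<le> \<alpha> * (A + \<beta> * h) + \<beta> * (B0 - real q * \<kappa> - \<alpha> * h)"
        using assms(5,6) ab unfolding \<alpha>_def[symmetric] \<beta>_def[symmetric]
        by (intro add_mono mult_left_mono) auto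
      also have "\<dots> = \<alpha> * A + \<beta> * (B0 - real q * \<kappa>)" by (simp add: algebra_simps)
      also have "\<dots> \<le> \<alpha> * (\<kappa> * real (p+1) * real (n - p) - real q * \<kappa>) + \<beta> * (\<kappa> * real (Suc n - q) * real q - real q * \<kappa>)"
        using AF assms(9) ab by (intro add_mono mult_left_mono) auto
      also have "\<dots> = (\<alpha> + \<beta>) * (\<kappa> * real s * real (n - s)) - \<kappa> * \<alpha> * (\<alpha> + \<beta>) * (\<beta> - 1)"
        unfolding s_eq np nq ns by (simp add: algebra_simps)
      also have "\<dots> \<le> (\<alpha> + \<beta>) * (\<kappa> * real s * real (n - s))"
        using ab b1 assms(4) by (simp add: mult_nonneg_nonneg)
      finally show ?thesis using pos by simp
    qed
  qed
qed


lemma wf_mono: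
  fixes x y h \<kappa> :: real
  assumes "x \<le> y"
  shows "x + min \<kappa> (max 0 (h - x)) \<le> y + min \<kappa> (max 0 (h - y))"
  using assms by (auto simp: min_def max_def)

lemma zplus:
  fixes \<kappa> :: real and n :: nat
  assumes kp: "\<kappa> \<ge> 0"
  shows "(\<forall>i j. 1 \<le> i \<longrightarrow> i \<le> j \<longrightarrow> j \<le> n \<longrightarrow> r i \<le> r j) \<Longrightarrow> (\<Sum>k\<in>{1..n}. r k) = 0
    \<Longrightarrow> (\<forall>s\<le>n. (\<Sum>k\<in>{n - s<..n}. r k) \<le> \<kappa> * real s * real (n - s))
    \<Longrightarrow> \<exists>c. (\<forall>k\<in>{1..n}. r k = (\<Sum>j\<in>{1..<k}. c k j) - (\<Sum>i\<in>{Suc k..n}. c i k))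
          \<and> (\<forall>i j. 1 \<le> j \<longrightarrow> j < i \<longrightarrow> i \<le> n \<longrightarrow> 0 \<le> c i j \<and> c i j \<le> \<kappa>)"
proof (induction n arbitrary: r)
  case 0 then show ?case by auto
next
  case (Suc n)
  note sorted = Suc.prems(1) and tot = Suc.prems(2) and top = Suc.prems(3)
  define F where "F = r (Suc n)"
  have rF: "\<And>k. k \<in> {1..n} \<Longrightarrow> r k \<le> F" unfolding F_def using sorted by auto
  have sum0: "(\<Sum>k\<in>{1..n}. r k) + F = 0" using tot unfolding F_def by (simp add: sum.cl_ivl_Suc)
  have "(\<Sum>k\<in>{1..n}. r k) \<le> real (card {1..n}) * F"
    using sum_bounded_above[of "{1..n}" r F] rF by auto
  then have "- F \<le> real n * F" using sum0 by simp
  then have "0 \<le> (real n + 1) * F" by (simp add: algebra_simps)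
  then have F0: "F \<ge> 0" by (simp add: zero_le_mult_iff add_pos_nonneg)
  have "(\<Sum>k\<in>{Suc n - 1<..Suc n}. r k) \<le> \<kappa> * real 1 * real (Suc n - 1)" by (rule top[rule_format]) simp
  moreover have "{Suc n - 1<..Suc n} = {Suc n}" by auto
  ultimately have Fk: "F \<le> \<kappa> * real n" unfolding F_def by simp
  define g where "g = (\<lambda>h. \<Sum>j\<in>{1..n}. min \<kappa> (max 0 (h - r j)))"
  define M where "M = (\<Sum>j\<in>{1..n}. \<bar>r j\<bar>)"
  have rM: "\<And>j. j \<in> {1..n} \<Longrightarrow> \<bar>r j\<bar> \<le> M" unfolding M_def
    by (rule member_le_sum) auto
  have g1: "g (- M) = 0" unfolding g_def
  proof (rule sum.neutral, intro ballI)
    fix j assume "j \<in> {1..n}"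
    then have "- M - r j \<le> 0" using rM[of j] by linarith
    then show "min \<kappa> (max 0 (- M - r j)) = 0" using kp by simp
  qed
  have g2: "g (M + \<kappa>) = real n * \<kappa>" unfolding g_def
  proof -
    have "\<forall>j\<in>{1..n}. min \<kappa> (max 0 (M + \<kappa> - r j)) = \<kappa>"
    proof
      fix j assume "j \<in> {1..n}"
      then have "M + \<kappa> - r j \<ge> \<kappa>" using rM[of j] by linarith
      then show "min \<kappa> (max 0 (M + \<kappa> - r j)) = \<kappa>" using kp by simp
    qed
    then show "(\<Sum>j\<in>{1..n}. min \<kappa> (max 0 (M + \<kappa> - r j))) = real n * \<kappa>" by simp
  qed
  have M0: "M \<ge> 0" unfolding M_def by (simp add: sum_nonneg)
  have cont: "continuous_on {- M..M + \<kappa>} g" unfolding g_def by (intro continuous_intros)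
  obtain h where h: "g h = F" using IVT'[of g "- M" F "M + \<kappa>"] g1 g2 F0 Fk cont M0 kp
    by (auto simp: algebra_simps)
  define z where "z = (\<lambda>j. min \<kappa> (max 0 (h - r j)))"
  define r2 where "r2 = (\<lambda>j. r j + z j)"
  have zb: "\<And>j. 0 \<le> z j \<and> z j \<le> \<kappa>" unfolding z_def using kp by auto
  have sumz: "(\<Sum>j\<in>{1..n}. z j) = F" using h unfolding g_def z_def by simp
  have sorted2: "\<forall>i j. 1 \<le> i \<longrightarrow> i \<le> j \<longrightarrow> j \<le> n \<longrightarrow> r2 i \<le> r2 j"
    unfolding r2_def z_def using sorted by (auto intro: wf_mono)
  have tot2: "(\<Sum>k\<in>{1..n}. r2 k) = 0" unfolding r2_def using sum0 sumz
    by (simp add: sum.distrib)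
  have top2: "\<forall>s\<le>n. (\<Sum>k\<in>{n - s<..n}. r2 k) \<le> \<kappa> * real s * real (n - s)"
  proof (intro allI impI)
    fix s assume sn: "s \<le> n"
    have up: "\<forall>i j. 1 \<le> i \<longrightarrow> h \<le> r i \<longrightarrow> i \<le> j \<longrightarrow> j \<le> n \<longrightarrow> h \<le> r j"
      using sorted by (meson le_SucI order_trans)
    obtain p where p: "p \<le> s" "\<forall>k. n - p < k \<and> k \<le> n \<longrightarrow> h \<le> r k"
      "\<forall>k. n - s < k \<and> k \<le> n - p \<longrightarrow> \<not> h \<le> r k"
      using block_top[OF up sn] by auto
    have down: "\<forall>i j. 1 \<le> i \<longrightarrow> i \<le> j \<longrightarrow> j \<le> n - s \<longrightarrow> r j + \<kappa> \<le> h \<longrightarrow> r i + \<kappa> \<le> h"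
    proof (intro allI impI)
      fix i j assume "1 \<le> i" "i \<le> j" "j \<le> n - s" "r j + \<kappa> \<le> h"
      moreover have "r i \<le> r j" using sorted \<open>1 \<le> i\<close> \<open>i \<le> j\<close> \<open>j \<le> n - s\<close> by auto
      ultimately show "r i + \<kappa> \<le> h" by linarith
    qed
    obtain q where q: "q \<le> n - s" "\<forall>k. 1 \<le> k \<and> k \<le> q \<longrightarrow> r k + \<kappa> \<le> h"
      "\<forall>k. q < k \<and> k \<le> n - s \<longrightarrow> \<not> r k + \<kappa> \<le> h"
      using block_bot[OF down] by auto
    define T where "T = (\<Sum>k\<in>{n - s<..n}. r2 k)"
    define A where "A = (\<Sum>k\<in>{n - p<..n}. r k)"
    define B0 where "B0 = - (\<Sum>k\<in>{1..q}. r k)"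
    have T1: "T \<le> A + real (s - p) * h"
    proof -
      have "T = (\<Sum>k\<in>{n - s<..n - p}. r2 k) + (\<Sum>k\<in>{n - p<..n}. r2 k)"
        unfolding T_def using p(1) sn by (intro split_gAM) auto
      moreover have "(\<Sum>k\<in>{n - p<..n}. r2 k) = A" unfolding A_def
      proof (rule sum.cong)
        fix k assume "k \<in> {n - p<..n}"
        then have "h \<le> r k" using p(2) by auto
        then show "r2 k = r k" unfolding r2_def z_def using kp by simp
      qed simp
      moreover have "(\<Sum>k\<in>{n - s<..n - p}. r2 k) \<le> (\<Sum>k\<in>{n - s<..n - p}. h)"
      proof (rule sum_mono)
        fix k assume "k \<in> {n - s<..n - p}"
        then have "r k < h" using p(3) by auto
        then show "r2 k \<le> h" unfolding r2_def z_def by (auto simp: min_def max_def)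
      qed
      moreover have "(\<Sum>k\<in>{n - s<..n - p}. h) = real (s - p) * h"
        using p(1) sn by simp
      ultimately show ?thesis by linarith
    qed
    have T2: "T \<le> B0 - real q * \<kappa> - real (n - s - q) * h"
    proof -
      have "(\<Sum>k\<in>{1..n}. r2 k) = (\<Sum>k\<in>{1..n - s}. r2 k) + T"
        unfolding T_def by (intro split_1AM) auto
      moreover have "(\<Sum>k\<in>{1..n - s}. r2 k) = (\<Sum>k\<in>{1..q}. r2 k) + (\<Sum>k\<in>{q<..n - s}. r2 k)"
        using q(1) by (intro split_1AM) auto
      moreover have "(\<Sum>k\<in>{1..q}. r2 k) = (\<Sum>k\<in>{1..q}. r k + \<kappa>)"
      proof (rule sum.cong)
        fix k assume "k \<in> {1..q}"
        then have "r k + \<kappa> \<le> h" using q(2) by auto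
        then show "r2 k = r k + \<kappa>" unfolding r2_def z_def using kp by (auto simp: min_def max_def)
      qed simp
      moreover have "(\<Sum>k\<in>{q<..n - s}. r2 k) \<ge> (\<Sum>k\<in>{q<..n - s}. h)"
      proof (rule sum_mono)
        fix k assume "k \<in> {q<..n - s}"
        then have "h < r k + \<kappa>" using q(3) by auto
        then show "h \<le> r2 k" unfolding r2_def z_def by (auto simp: min_def max_def)
      qed
      moreover have "(\<Sum>k\<in>{q<..n - s}. h) = real (n - s - q) * h" by simp
      moreover have "(\<Sum>k\<in>{1..q}. r k + \<kappa>) = - B0 + real q * \<kappa>"
        unfolding B0_def by (simp add: sum.distrib)
      ultimately show ?thesis using tot2 by linarith
    qed
    have AF: "A + F \<le> \<kappa> * real (p+1) * real (n - p)"
    proof -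
      have "(\<Sum>k\<in>{Suc n - (p+1)<..Suc n}. r k) \<le> \<kappa> * real (p+1) * real (Suc n - (p+1))"
        using p(1) sn by (intro top[rule_format]) simp
      moreover have "{Suc n - (p+1)<..Suc n} = {n - p<..Suc n}" by auto
      moreover have "(\<Sum>k\<in>{n - p<..Suc n}. r k) = A + F"
      proof -
        have "{n<..Suc n} = {Suc n}" by auto
        then show ?thesis unfolding A_def F_def using p(1) sn by (subst split_gAM[of _ n]) auto
      qed
      ultimately show ?thesis by simp
    qed
    have ApF: "A \<le> real p * F"
    proof -
      have "A \<le> real (card {n - p<..n}) * F" unfolding A_def
        using sum_bounded_above[of "{n - p<..n}" r F] rF by auto
      then show ?thesis using p(1) sn by simp
    qed
    have BB: "B0 \<le> \<kappa> * real (Suc n - q) * real q"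
    proof -
      have "(\<Sum>k\<in>{Suc n - (Suc n - q)<..Suc n}. r k) \<le> \<kappa> * real (Suc n - q) * real (Suc n - (Suc n - q))"
        by (rule top[rule_format]) simp
      moreover have "Suc n - (Suc n - q) = q" using q(1) sn by auto
      moreover have "(\<Sum>k\<in>{1..Suc n}. r k) = (\<Sum>k\<in>{1..q}. r k) + (\<Sum>k\<in>{q<..Suc n}. r k)"
        using q(1) by (intro split_1AM) auto
      ultimately show ?thesis unfolding B0_def using tot by simp
    qed
    have qF: "real q * \<kappa> \<le> F"
    proof -
      have "(\<Sum>j\<in>{1..q}. z j) \<le> (\<Sum>j\<in>{1..n}. z j)"
        using q(1) zb by (intro sum_mono2) auto
      moreover have "(\<Sum>j\<in>{1..q}. z j) = (\<Sum>j\<in>{1..q}. \<kappa>)"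
      proof (rule sum.cong)
        fix k assume "k \<in> {1..q}"
        then have "r k + \<kappa> \<le> h" using q(2) by auto
        then show "z k = \<kappa>" unfolding z_def using kp by (auto simp: min_def max_def)
      qed simp
      ultimately show ?thesis using sumz by simp
    qed
    show "(\<Sum>k\<in>{n - s<..n}. r2 k) \<le> \<kappa> * real s * real (n - s)"
      using arith2[OF p(1) q(1) sn kp T1 T2 AF ApF BB qF] unfolding T_def .
  qed
  obtain c' where c': "\<forall>k\<in>{1..n}. r2 k = (\<Sum>j\<in>{1..<k}. c' k j) - (\<Sum>i\<in>{Suc k..n}. c' i k)"
    "\<forall>i j. 1 \<le> j \<longrightarrow> j < i \<longrightarrow> i \<le> n \<longrightarrow> 0 \<le> c' i j \<and> c' i j \<le> \<kappa>"
    using Suc.IH[OF sorted2 tot2 top2] by blast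
  define c where "c = (\<lambda>i j. if i = Suc n then z j else c' i j)"
  have eq: "\<forall>k\<in>{1..Suc n}. r k = (\<Sum>j\<in>{1..<k}. c k j) - (\<Sum>i\<in>{Suc k..Suc n}. c i k)"
  proof
    fix k assume k: "k \<in> {1..Suc n}"
    show "r k = (\<Sum>j\<in>{1..<k}. c k j) - (\<Sum>i\<in>{Suc k..Suc n}. c i k)"
    proof (cases "k = Suc n")
      case True
      have "{1..<Suc n} = {1..n}" by auto
      then show ?thesis using True sumz unfolding c_def F_def by simp
    next
      case False
      then have kn: "k \<in> {1..n}" using k by auto
      have s1: "(\<Sum>j\<in>{1..<k}. c k j) = (\<Sum>j\<in>{1..<k}. c' k j)" unfolding c_def using False by simp
      have s2: "(\<Sum>i\<in>{Suc k..Suc n}. c i k) = (\<Sum>i\<in>{Suc k..n}. c' i k) + z k"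
      proof -
        have "(\<Sum>i\<in>{Suc k..Suc n}. c i k) = (\<Sum>i\<in>{Suc k..n}. c i k) + c (Suc n) k"
          using kn by (simp add: sum.cl_ivl_Suc)
        moreover have "(\<Sum>i\<in>{Suc k..n}. c i k) = (\<Sum>i\<in>{Suc k..n}. c' i k)"
          unfolding c_def by (rule sum.cong) auto
        ultimately show ?thesis unfolding c_def by simp
      qed
      have "r2 k = (\<Sum>j\<in>{1..<k}. c' k j) - (\<Sum>i\<in>{Suc k..n}. c' i k)" using c'(1) kn by blast
      then show ?thesis using s1 s2 unfolding r2_def by linarith
    qed
  qed
  have bnd: "\<forall>i j. 1 \<le> j \<longrightarrow> j < i \<longrightarrow> i \<le> Suc n \<longrightarrow> 0 \<le> c i j \<and> c i j \<le> \<kappa>"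
    unfolding c_def using c'(2) zb by (auto simp: le_Suc_eq)
  show ?case using eq bnd by blast
qed


lemma clamp_mono:
  fixes x y t L U :: real
  assumes "x \<le> y"
  shows "x - max L (min U (x - t)) \<le> y - max L (min U (y - t))"
  using assms by (auto simp: min_def max_def)

lemma part1:
  fixes b :: "nat \<Rightarrow> real" and L U \<kappa> :: real and d :: nat
  assumes LU: "L \<le> U" and kp: "\<kappa> \<ge> 0"
    and sorted: "\<forall>i j. 1 \<le> i \<longrightarrow> i \<le> j \<longrightarrow> j \<le> d \<longrightarrow> b i \<le> b j"
    and TB: "\<forall>p\<le>d. (\<Sum>k\<in>{d - p<..d}. b k) \<le> real p * U + \<kappa> * real p * real (d - p)"
    and BB: "\<forall>q\<le>d. real q * L - \<kappa> * real q * real (d - q) \<le> (\<Sum>k\<in>{1..q}. b k)"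
  shows "\<exists>w. (\<forall>k. L \<le> w k \<and> w k \<le> U)
    \<and> (\<forall>i j. 1 \<le> i \<longrightarrow> i \<le> j \<longrightarrow> j \<le> d \<longrightarrow> b i - w i \<le> b j - w j)
    \<and> (\<Sum>k\<in>{1..d}. b k - w k) = 0
    \<and> (\<forall>s\<le>d. (\<Sum>k\<in>{d - s<..d}. b k - w k) \<le> \<kappa> * real s * real (d - s))"
proof -
  define f where "f = (\<lambda>t. \<Sum>k\<in>{1..d}. b k - max L (min U (b k - t)))"
  define M where "M = (\<Sum>j\<in>{1..d}. \<bar>b j\<bar>)"
  have bM: "\<And>j. j \<in> {1..d} \<Longrightarrow> \<bar>b j\<bar> \<le> M" unfolding M_def
    by (rule member_le_sum) auto
  have M0: "M \<ge> 0" unfolding M_def by (simp add: sum_nonneg)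
  have e0: "{d - d<..d} = {1..d}" by auto
  have f0: "f (- M - U) = (\<Sum>k\<in>{1..d}. b k) - real d * U"
  proof -
    have "f (- M - U) = (\<Sum>k\<in>{1..d}. b k - U)" unfolding f_def
    proof (rule sum.cong)
      fix k assume "k \<in> {1..d}"
      then have "b k - (- M - U) \<ge> U" using bM[of k] by linarith
      then show "b k - max L (min U (b k - (- M - U))) = b k - U" using LU by simp
    qed simp
    then show ?thesis by (simp add: sum_subtractf)
  qed
  have f1: "f (M - L) = (\<Sum>k\<in>{1..d}. b k) - real d * L"
  proof -
    have "f (M - L) = (\<Sum>k\<in>{1..d}. b k - L)" unfolding f_def
    proof (rule sum.cong)
      fix k assume "k \<in> {1..d}"
      then have "b k - (M - L) \<le> L" using bM[of k] by linarith
      then show "b k - max L (min U (b k - (M - L))) = b k - L" using LU by simp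
    qed simp
    then show ?thesis by (simp add: sum_subtractf)
  qed
  have "(\<Sum>k\<in>{d - d<..d}. b k) \<le> real d * U + \<kappa> * real d * real (d - d)" by (rule TB[rule_format]) simp
  then have fa: "f (- M - U) \<le> 0" using f0 e0 by simp
  have "real d * L - \<kappa> * real d * real (d - d) \<le> (\<Sum>k\<in>{1..d}. b k)" by (rule BB[rule_format]) simp
  then have fb: "0 \<le> f (M - L)" using f1 by simp
  have cont: "continuous_on {- M - U..M - L} f" unfolding f_def by (intro continuous_intros)
  obtain t where t: "f t = 0" using IVT'[of f "- M - U" 0 "M - L"] fa fb cont M0 LU by auto
  define w where "w = (\<lambda>k. max L (min U (b k - t)))"
  have wb: "\<forall>k. L \<le> w k \<and> w k \<le> U" unfolding w_def using LU by auto
  have sorted2: "\<forall>i j. 1 \<le> i \<longrightarrow> i \<le> j \<longrightarrow> j \<le> d \<longrightarrow> b i - w i \<le> b j - w j"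
    unfolding w_def using sorted by (auto intro: clamp_mono)
  have tot: "(\<Sum>k\<in>{1..d}. b k - w k) = 0" using t unfolding f_def w_def by simp
  have top: "\<forall>s\<le>d. (\<Sum>k\<in>{d - s<..d}. b k - w k) \<le> \<kappa> * real s * real (d - s)"
  proof (intro allI impI)
    fix s assume sd: "s \<le> d"
    have up: "\<forall>i j. 1 \<le> i \<longrightarrow> U \<le> b i - t \<longrightarrow> i \<le> j \<longrightarrow> j \<le> d \<longrightarrow> U \<le> b j - t"
    proof (intro allI impI)
      fix i j assume "1 \<le> i" "U \<le> b i - t" "i \<le> j" "j \<le> d"
      moreover have "b i \<le> b j" using sorted \<open>1 \<le> i\<close> \<open>i \<le> j\<close> \<open>j \<le> d\<close> by auto
      ultimately show "U \<le> b j - t" by linarith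
    qed
    obtain p where p: "p \<le> s" "\<forall>k. d - p < k \<and> k \<le> d \<longrightarrow> U \<le> b k - t"
      "\<forall>k. d - s < k \<and> k \<le> d - p \<longrightarrow> \<not> U \<le> b k - t"
      using block_top[OF up sd] by auto
    have down: "\<forall>i j. 1 \<le> i \<longrightarrow> i \<le> j \<longrightarrow> j \<le> d - s \<longrightarrow> b j - t \<le> L \<longrightarrow> b i - t \<le> L"
    proof (intro allI impI)
      fix i j assume "1 \<le> i" "i \<le> j" "j \<le> d - s" "b j - t \<le> L"
      moreover have "b i \<le> b j" using sorted \<open>1 \<le> i\<close> \<open>i \<le> j\<close> \<open>j \<le> d - s\<close> by auto
      ultimately show "b i - t \<le> L" by linarith
    qed
    obtain q where q: "q \<le> d - s" "\<forall>k. 1 \<le> k \<and> k \<le> q \<longrightarrow> b k - t \<le> L"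
      "\<forall>k. q < k \<and> k \<le> d - s \<longrightarrow> \<not> b k - t \<le> L"
      using block_bot[OF down] by auto
    define r where "r = (\<lambda>k. b k - w k)"
    define T where "T = (\<Sum>k\<in>{d - s<..d}. r k)"
    define X where "X = (\<Sum>k\<in>{d - p<..d}. b k) - real p * U"
    define Y where "Y = real q * L - (\<Sum>k\<in>{1..q}. b k)"
    have T1: "T \<le> X + real (s - p) * t"
    proof -
      have "T = (\<Sum>k\<in>{d - s<..d - p}. r k) + (\<Sum>k\<in>{d - p<..d}. r k)"
        unfolding T_def using p(1) sd by (intro split_gAM) auto
      moreover have "(\<Sum>k\<in>{d - p<..d}. r k) = (\<Sum>k\<in>{d - p<..d}. b k - U)"
      proof (rule sum.cong)
        fix k assume "k \<in> {d - p<..d}"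
        then have "U \<le> b k - t" using p(2) by auto
        then show "r k = b k - U" unfolding r_def w_def using LU by simp
      qed simp
      moreover have "(\<Sum>k\<in>{d - p<..d}. b k - U) = X" unfolding X_def using p(1) sd
        by (simp add: sum_subtractf)
      moreover have "(\<Sum>k\<in>{d - s<..d - p}. r k) \<le> (\<Sum>k\<in>{d - s<..d - p}. t)"
      proof (rule sum_mono)
        fix k assume "k \<in> {d - s<..d - p}"
        then have "b k - t < U" using p(3) by auto
        then show "r k \<le> t" unfolding r_def w_def by (auto simp: min_def max_def)
      qed
      moreover have "(\<Sum>k\<in>{d - s<..d - p}. t) = real (s - p) * t"
        using p(1) sd by simp
      ultimately show ?thesis by linarith
    qed
    have T2: "T \<le> Y - real (d - s - q) * t"
    proof -
      have "(\<Sum>k\<in>{1..d}. r k) = (\<Sum>k\<in>{1..d - s}. r k) + T"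
        unfolding T_def by (intro split_1AM) auto
      moreover have "(\<Sum>k\<in>{1..d - s}. r k) = (\<Sum>k\<in>{1..q}. r k) + (\<Sum>k\<in>{q<..d - s}. r k)"
        using q(1) by (intro split_1AM) auto
      moreover have "(\<Sum>k\<in>{1..q}. r k) = (\<Sum>k\<in>{1..q}. b k - L)"
      proof (rule sum.cong)
        fix k assume "k \<in> {1..q}"
        then have "b k - t \<le> L" using q(2) by auto
        then show "r k = b k - L" unfolding r_def w_def using LU by (auto simp: min_def max_def)
      qed simp
      moreover have "(\<Sum>k\<in>{q<..d - s}. r k) \<ge> (\<Sum>k\<in>{q<..d - s}. t)"
      proof (rule sum_mono)
        fix k assume "k \<in> {q<..d - s}"
        then have "L < b k - t" using q(3) by auto
        then show "t \<le> r k" unfolding r_def w_def by (auto simp: min_def max_def)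
      qed
      moreover have "(\<Sum>k\<in>{q<..d - s}. t) = real (d - s - q) * t" by simp
      moreover have "(\<Sum>k\<in>{1..q}. b k - L) = - Y"
        unfolding Y_def by (simp add: sum_subtractf)
      moreover have "(\<Sum>k\<in>{1..d}. r k) = 0" using tot unfolding r_def .
      ultimately show ?thesis by linarith
    qed
    have XB: "X \<le> \<kappa> * real p * real (d - p)" unfolding X_def using TB[rule_format, of p] p(1) sd by linarith
    have YB: "Y \<le> \<kappa> * real q * real (d - q)" unfolding Y_def using BB[rule_format, of q] q(1) by linarith
    show "(\<Sum>k\<in>{d - s<..d}. b k - w k) \<le> \<kappa> * real s * real (d - s)"
      using arith1[OF p(1) q(1) sd kp T1 T2 XB YB] unfolding T_def r_def .
  qed
  show ?thesis using wb sorted2 tot top by blast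
qed


lemma beta_sum_delta:
  fixes g :: "nat \<Rightarrow> real"
  assumes "finite A"
  shows "(\<Sum>m\<in>A. g m * beta m k) = (if k \<in> A then g k else 0)"
proof -
  have "(\<Sum>m\<in>A. g m * beta m k) = (\<Sum>m\<in>A. if k = m then g m else 0)"
    by (rule sum.cong) (auto simp: beta_def)
  also have "\<dots> = (if k \<in> A then g k else 0)" using assms by (rule sum.delta')
  finally show ?thesis .
qed

lemma V_rep:
  assumes "\<chi> \<in> V a d"
  shows "\<exists>tt w. (\<forall>k. k \<notin> {1..d} \<longrightarrow> \<chi> k = 0)
    \<and> (\<forall>k\<in>{1..d}. \<chi> k = (\<Sum>j\<in>{1..d}. 3/2 * (tt (k, j) - tt (j, k))) + w k)
    \<and> (\<forall>i j. 0 \<le> tt (i, j) \<and> tt (i, j) \<le> 1)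
    \<and> (\<forall>k. - (real a + 2) / 2 \<le> w k \<and> w k \<le> real a / 2)"
proof -
  define I where "I = {1..d} \<times> {1..d}"
  define S1 where "S1 = (\<lambda>(i,j). seg (\<lambda>_. 0) (\<lambda>k. beta i k - beta j k))"
  define S2 where "S2 = (\<lambda>k. seg (\<lambda>m. - beta k m) (beta k))"
  define S3 where "S3 = (\<lambda>k. seg (\<lambda>m. - beta k m) (\<lambda>_. 0))"
  have "\<chi> \<in> vplus (vplus (vscale (3/2) (msum I S1)) (vscale (real a / 2) (msum {1..d} S2))) (msum {1..d} S3)"
    using assms unfolding V_def I_def S1_def S2_def S3_def .
  then have "\<exists>u v3. \<chi> = (\<lambda>k. u k + v3 k) \<and> u \<in> vplus (vscale (3/2) (msum I S1)) (vscale (real a / 2) (msum {1..d} S2)) \<and> v3 \<in> msum {1..d} S3"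
    unfolding vplus_def[of "vplus _ _"] by (simp only: mem_Collect_eq; blast)
  then obtain u v3 where chi: "\<chi> = (\<lambda>k. u k + v3 k)"
    and u: "u \<in> vplus (vscale (3/2) (msum I S1)) (vscale (real a / 2) (msum {1..d} S2))"
    and v3: "v3 \<in> msum {1..d} S3" by blast
  from u have "\<exists>u1 u2. u = (\<lambda>k. u1 k + u2 k) \<and> u1 \<in> vscale (3/2) (msum I S1) \<and> u2 \<in> vscale (real a / 2) (msum {1..d} S2)"
    unfolding vplus_def by (simp only: mem_Collect_eq; blast)
  then obtain u1 u2 where uu: "u = (\<lambda>k. u1 k + u2 k)" and u1: "u1 \<in> vscale (3/2) (msum I S1)"
    and u2: "u2 \<in> vscale (real a / 2) (msum {1..d} S2)" by blast
  from u1 have "\<exists>X. u1 = (\<lambda>k. 3/2 * (\<Sum>i\<in>I. X i k)) \<and> (\<forall>i\<in>I. X i \<in> S1 i)"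
    unfolding vscale_def msum_def by auto
  then obtain X where u1e: "u1 = (\<lambda>k. 3/2 * (\<Sum>i\<in>I. X i k))" and X: "\<forall>i\<in>I. X i \<in> S1 i" by blast
  from u2 have "\<exists>Y. u2 = (\<lambda>k. real a / 2 * (\<Sum>i\<in>{1..d}. Y i k)) \<and> (\<forall>i\<in>{1..d}. Y i \<in> S2 i)"
    unfolding vscale_def msum_def by auto
  then obtain Y where u2e: "u2 = (\<lambda>k. real a / 2 * (\<Sum>i\<in>{1..d}. Y i k))" and Y: "\<forall>i\<in>{1..d}. Y i \<in> S2 i" by blast
  from v3 have "\<exists>Z. v3 = (\<lambda>k. (\<Sum>i\<in>{1..d}. Z i k)) \<and> (\<forall>i\<in>{1..d}. Z i \<in> S3 i)"
    unfolding msum_def by auto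
  then obtain Z where v3e: "v3 = (\<lambda>k. (\<Sum>i\<in>{1..d}. Z i k))" and Z: "\<forall>i\<in>{1..d}. Z i \<in> S3 i" by blast
  have "\<forall>ij\<in>I. \<exists>t. 0 \<le> t \<and> t \<le> 1 \<and> X ij = (\<lambda>k. t * (beta (fst ij) k - beta (snd ij) k))"
  proof
    fix ij assume "ij \<in> I"
    then have "X ij \<in> S1 ij" using X by blast
    then show "\<exists>t. 0 \<le> t \<and> t \<le> 1 \<and> X ij = (\<lambda>k. t * (beta (fst ij) k - beta (snd ij) k))"
      unfolding S1_def seg_def by (cases ij) auto
  qed
  then obtain t0 where t0: "\<forall>ij\<in>I. 0 \<le> t0 ij \<and> t0 ij \<le> 1 \<and> X ij = (\<lambda>k. t0 ij * (beta (fst ij) k - beta (snd ij) k))"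
    by metis
  have "\<forall>i\<in>{1..d}. \<exists>t. 0 \<le> t \<and> t \<le> 1 \<and> Y i = (\<lambda>k. (1 - t) * (- beta i k) + t * beta i k)"
    using Y unfolding S2_def seg_def by blast
  then obtain sy where sy: "\<forall>i\<in>{1..d}. 0 \<le> sy i \<and> sy i \<le> 1 \<and> Y i = (\<lambda>k. (1 - sy i) * (- beta i k) + sy i * beta i k)"
    by metis
  have "\<forall>i\<in>{1..d}. \<exists>t. 0 \<le> t \<and> t \<le> 1 \<and> Z i = (\<lambda>k. (1 - t) * (- beta i k) + t * 0)"
    using Z unfolding S3_def seg_def by blast
  then obtain sz where sz: "\<forall>i\<in>{1..d}. 0 \<le> sz i \<and> sz i \<le> 1 \<and> Z i = (\<lambda>k. (1 - sz i) * (- beta i k) + sz i * 0)"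
    by metis
  define tt where "tt = (\<lambda>ij. if ij \<in> I then t0 ij else 0)"
  define w where "w = (\<lambda>k. if k \<in> {1..d} then real a / 2 * (2 * sy k - 1) + (sz k - 1) else 0)"
  have sumX: "(\<Sum>i\<in>I. X i k) = (if k \<in> {1..d} then (\<Sum>j\<in>{1..d}. tt (k, j) - tt (j, k)) else 0)" for k
  proof -
    have "(\<Sum>i\<in>I. X i k) = (\<Sum>ij\<in>I. tt ij * (beta (fst ij) k - beta (snd ij) k))"
      using t0 unfolding tt_def by (intro sum.cong) auto
    also have "\<dots> = (\<Sum>i\<in>{1..d}. \<Sum>j\<in>{1..d}. tt (i, j) * beta i k) - (\<Sum>i\<in>{1..d}. \<Sum>j\<in>{1..d}. tt (i, j) * beta j k)"
    proof -
      have cp: "\<And>G. (\<Sum>ij\<in>{1..d}\<times>{1..d}. G ij) = (\<Sum>i\<in>{1..d}. \<Sum>j\<in>{1..d}. G (i,j))"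
        by (simp add: sum.cartesian_product)
      show ?thesis unfolding I_def cp by (simp add: right_diff_distrib sum_subtractf)
    qed
    also have "(\<Sum>i\<in>{1..d}. \<Sum>j\<in>{1..d}. tt (i, j) * beta i k) = (\<Sum>i\<in>{1..d}. (\<Sum>j\<in>{1..d}. tt (i, j)) * beta i k)"
      by (simp add: sum_distrib_right)
    also have "\<dots> = (if k \<in> {1..d} then (\<Sum>j\<in>{1..d}. tt (k, j)) else 0)"
      by (rule beta_sum_delta) simp
    also have "(\<Sum>i\<in>{1..d}. \<Sum>j\<in>{1..d}. tt (i, j) * beta j k) = (\<Sum>i\<in>{1..d}. if k \<in> {1..d} then tt (i, k) else 0)"
      by (rule sum.cong) (simp_all add: beta_sum_delta)
    also have "\<dots> = (if k \<in> {1..d} then (\<Sum>i\<in>{1..d}. tt (i, k)) else 0)"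
      by (cases "1 \<le> k \<and> k \<le> d") auto
    finally have "(\<Sum>i\<in>I. X i k) = (if k \<in> {1..d} then (\<Sum>j\<in>{1..d}. tt (k, j)) else 0) - (if k \<in> {1..d} then (\<Sum>i\<in>{1..d}. tt (i, k)) else 0)" .
    then show ?thesis by (simp add: sum_subtractf)
  qed
  have sumY: "(\<Sum>i\<in>{1..d}. Y i k) = (if k \<in> {1..d} then 2 * sy k - 1 else 0)" for k
  proof -
    have "(\<Sum>i\<in>{1..d}. Y i k) = (\<Sum>i\<in>{1..d}. (2 * sy i - 1) * beta i k)"
      using sy by (intro sum.cong) (auto simp: algebra_simps)
    then show ?thesis by (simp add: beta_sum_delta)
  qed
  have sumZ: "(\<Sum>i\<in>{1..d}. Z i k) = (if k \<in> {1..d} then sz k - 1 else 0)" for k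
  proof -
    have "(\<Sum>i\<in>{1..d}. Z i k) = (\<Sum>i\<in>{1..d}. (sz i - 1) * beta i k)"
      using sz by (intro sum.cong) (auto simp: algebra_simps)
    then show ?thesis by (simp add: beta_sum_delta)
  qed
  have chik: "\<chi> k = 3/2 * (\<Sum>i\<in>I. X i k) + real a / 2 * (\<Sum>i\<in>{1..d}. Y i k) + (\<Sum>i\<in>{1..d}. Z i k)" for k
    using chi uu u1e u2e v3e by simp
  have P1: "\<forall>k. k \<notin> {1..d} \<longrightarrow> \<chi> k = 0" using chik sumX sumY sumZ by simp
  have P2: "\<forall>k\<in>{1..d}. \<chi> k = (\<Sum>j\<in>{1..d}. 3/2 * (tt (k, j) - tt (j, k))) + w k"
  proof
    fix k assume k: "k \<in> {1..d}"
    show "\<chi> k = (\<Sum>j\<in>{1..d}. 3/2 * (tt (k, j) - tt (j, k))) + w k"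
    proof -
      have c1: "\<chi> k = 3/2 * (\<Sum>j\<in>{1..d}. tt (k, j) - tt (j, k)) + real a / 2 * (2 * sy k - 1) + (sz k - 1)"
        using chik[of k] k unfolding sumX[of k] sumY[of k] sumZ[of k] by simp
      have e: "(\<Sum>j\<in>{1..d}. 3/2 * (tt (k, j) - tt (j, k))) = 3/2 * (\<Sum>j\<in>{1..d}. tt (k, j) - tt (j, k))"
        by (rule sum_distrib_left[symmetric])
      have w: "w k = real a / 2 * (2 * sy k - 1) + (sz k - 1)" using k unfolding w_def by simp
      show ?thesis using c1 e w by linarith
    qed
  qed
  have P3: "\<forall>i j. 0 \<le> tt (i, j) \<and> tt (i, j) \<le> 1" using t0 unfolding tt_def by auto
  have P4: "\<forall>k. - (real a + 2) / 2 \<le> w k \<and> w k \<le> real a / 2"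
  proof
    fix k show "- (real a + 2) / 2 \<le> w k \<and> w k \<le> real a / 2"
    proof (cases "k \<in> {1..d}")
      case True
      then have "0 \<le> sy k" "sy k \<le> 1" "0 \<le> sz k" "sz k \<le> 1" using sy sz by auto
      moreover have "real a / 2 * (2 * sy k - 1) \<le> real a / 2" "- (real a / 2) \<le> real a / 2 * (2 * sy k - 1)"
        using calculation by (auto intro: mult_left_le mult_le_cancel_left1 simp: algebra_simps)
      ultimately show ?thesis using True unfolding w_def by (auto simp: field_simps)
    next
      case False
      then have "w k = 0" unfolding w_def by (rule if_not_P)
      then show ?thesis by simp
    qed
  qed
  show ?thesis using P1 P2 P3 P4 by blast
qed


lemma cut_upper:
  fixes y :: "nat \<Rightarrow> nat \<Rightarrow> real"
  assumes anti: "\<forall>k j. y k j = - y j k" and bd: "\<forall>k j. y k j \<le> \<kappa>" and S: "S \<subseteq> {1..d}"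
  shows "(\<Sum>k\<in>S. \<Sum>j\<in>{1..d}. y k j) \<le> \<kappa> * real (card S) * real (d - card S)"
proof -
  have fin: "finite S" using S finite_subset by blast
  have sp: "\<And>k. (\<Sum>j\<in>{1..d}. y k j) = (\<Sum>j\<in>{1..d} - S. y k j) + (\<Sum>j\<in>S. y k j)"
    using S by (intro sum.subset_diff) auto
  define X where "X = (\<Sum>k\<in>S. \<Sum>j\<in>S. y k j)"
  have "X = (\<Sum>j\<in>S. \<Sum>k\<in>S. y k j)" unfolding X_def by (rule sum.swap)
  also have "\<dots> = (\<Sum>j\<in>S. \<Sum>k\<in>S. - y j k)" by (intro sum.cong refl) (rule anti[rule_format])
  also have "\<dots> = - X" unfolding X_def by (simp add: sum_negf)
  finally have X0: "X = 0" by simp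
  have "(\<Sum>k\<in>S. \<Sum>j\<in>{1..d}. y k j) = (\<Sum>k\<in>S. \<Sum>j\<in>{1..d} - S. y k j) + X"
    unfolding X_def sp by (simp add: sum.distrib)
  also have "\<dots> \<le> (\<Sum>k\<in>S. \<Sum>j\<in>{1..d} - S. \<kappa>) + 0"
    using X0 bd by (intro add_mono sum_mono) auto
  also have "\<dots> = \<kappa> * real (card S) * real (d - card S)"
    using S fin by (simp add: card_Diff_subset)
  finally show ?thesis .
qed

lemma coord:
  fixes c :: "nat \<Rightarrow> nat \<Rightarrow> real"
  assumes k: "k \<in> {1..d}"
  shows "(\<Sum>i\<in>{1..d}. \<Sum>j\<in>{1..<i}. c i j * (beta i k - beta j k))
         = (\<Sum>j\<in>{1..<k}. c k j) - (\<Sum>i\<in>{Suc k..d}. c i k)"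
proof -
  have "(\<Sum>i\<in>{1..d}. \<Sum>j\<in>{1..<i}. c i j * (beta i k - beta j k))
     = (\<Sum>i\<in>{1..d}. (\<Sum>j\<in>{1..<i}. c i j) * beta i k) - (\<Sum>i\<in>{1..d}. \<Sum>j\<in>{1..<i}. c i j * beta j k)"
    by (simp add: right_diff_distrib sum_subtractf sum_distrib_right)
  also have "(\<Sum>i\<in>{1..d}. (\<Sum>j\<in>{1..<i}. c i j) * beta i k) = (\<Sum>j\<in>{1..<k}. c k j)"
    using beta_sum_delta[of "{1..d}" "\<lambda>i. \<Sum>j\<in>{1..<i}. c i j" k] k by simp
  also have "(\<Sum>i\<in>{1..d}. \<Sum>j\<in>{1..<i}. c i j * beta j k) = (\<Sum>i\<in>{1..d}. if k \<in> {1..<i} then c i k else 0)"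
    by (rule sum.cong) (simp_all add: beta_sum_delta)
  also have "\<dots> = (\<Sum>i\<in>{i\<in>{1..d}. k \<in> {1..<i}}. c i k)"
    by (rule sum.inter_filter[symmetric]) simp
  also have "{i\<in>{1..d}. k \<in> {1..<i}} = {Suc k..d}" using k by auto
  finally show ?thesis .
qed

lemma coord_out:
  fixes c :: "nat \<Rightarrow> nat \<Rightarrow> real"
  assumes k: "k \<notin> {1..d}"
  shows "(\<Sum>i\<in>{1..d}. \<Sum>j\<in>{1..<i}. c i j * (beta i k - beta j k)) = 0"
  using k by (intro sum.neutral ballI) (auto simp: beta_def)

theorem proposition3p3:
  fixes a d :: nat and \<chi> :: charvec
  assumes "strictly_dominant d \<chi>"
    and "\<chi> \<in> V a d"
  shows "\<exists>c :: nat \<Rightarrow> nat \<Rightarrow> real. \<exists>cc :: nat \<Rightarrow> real.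
           \<chi> = (\<lambda>k. (\<Sum>i\<in>{1..d}. \<Sum>j\<in>{1..<i}. c i j * (beta i k - beta j k))
                    + (\<Sum>i\<in>{1..d}. cc i * beta i k))
         \<and> (\<forall>i j. 1 \<le> j \<and> j < i \<and> i \<le> d \<longrightarrow> 0 \<le> c i j \<and> c i j \<le> 3/2)
         \<and> (\<forall>i. 1 \<le> i \<and> i \<le> d \<longrightarrow> - (real a + 2) / 2 \<le> cc i \<and> cc i \<le> real a / 2)"
proof -
  obtain tt w where out: "\<forall>k. k \<notin> {1..d} \<longrightarrow> \<chi> k = 0"
    and inn: "\<forall>k\<in>{1..d}. \<chi> k = (\<Sum>j\<in>{1..d}. 3/2 * (tt (k, j) - tt (j, k))) + w k"
    and ttb: "\<forall>i j. 0 \<le> tt (i, j) \<and> tt (i, j) \<le> 1"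
    and wb: "\<forall>k. - (real a + 2) / 2 \<le> w k \<and> w k \<le> real a / 2"
    using V_rep[OF assms(2)] by blast
  define y where "y = (\<lambda>k j. 3/2 * (tt (k, j) - tt (j, k)))"
  define L where "L = - (real a + 2) / 2"
  define U where "U = real a / 2"
  define \<kappa> :: real where "\<kappa> = 3/2"
  have anti: "\<forall>k j. y k j = - y j k" unfolding y_def by (simp add: algebra_simps)
  have yb: "\<forall>k j. y k j \<le> \<kappa>"
  proof (intro allI)
    fix k j
    have "tt (k, j) \<le> 1" "0 \<le> tt (j, k)" using ttb by auto
    then show "y k j \<le> \<kappa>" unfolding y_def \<kappa>_def by (simp add: algebra_simps)
  qed
  have anti2: "\<forall>k j. - y k j = - (- y j k)"
  proof (intro allI)
    fix k j show "- y k j = - (- y j k)" using anti[rule_format, of k j] by simp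
  qed
  have yb2: "\<forall>k j. - y k j \<le> \<kappa>" using yb anti by (metis minus_minus)
  have LU: "L \<le> U" unfolding L_def U_def by simp
  have kp: "\<kappa> \<ge> 0" unfolding \<kappa>_def by simp
  have sorted: "\<forall>i j. 1 \<le> i \<longrightarrow> i \<le> j \<longrightarrow> j \<le> d \<longrightarrow> \<chi> i \<le> \<chi> j"
    using assms(1) unfolding strictly_dominant_def by (metis le_less order_refl)
  have sumS: "(\<Sum>k\<in>S. \<chi> k) = (\<Sum>k\<in>S. \<Sum>j\<in>{1..d}. y k j) + (\<Sum>k\<in>S. w k)" if "S \<subseteq> {1..d}" for S
  proof -
    have "(\<Sum>k\<in>S. \<chi> k) = (\<Sum>k\<in>S. (\<Sum>j\<in>{1..d}. y k j) + w k)"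
      using that inn unfolding y_def by (intro sum.cong) auto
    then show ?thesis by (simp add: sum.distrib)
  qed
  have TB: "\<forall>p\<le>d. (\<Sum>k\<in>{d - p<..d}. \<chi> k) \<le> real p * U + \<kappa> * real p * real (d - p)"
  proof (intro allI impI)
    fix p assume pd: "p \<le> d"
    define S where "S = {d - p<..d}"
    have Ss: "S \<subseteq> {1..d}" unfolding S_def by auto
    have cS: "card S = p" unfolding S_def using pd by simp
    have "(\<Sum>k\<in>S. w k) \<le> real (card S) * U" using sum_bounded_above[of S w U] wb unfolding U_def by auto
    then have 1: "(\<Sum>k\<in>S. w k) \<le> real p * U" unfolding cS .
    have "(\<Sum>k\<in>S. \<Sum>j\<in>{1..d}. y k j) \<le> \<kappa> * real (card S) * real (d - card S)"
      by (rule cut_upper[OF anti yb Ss])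
    then have 2: "(\<Sum>k\<in>S. \<Sum>j\<in>{1..d}. y k j) \<le> \<kappa> * real p * real (d - p)" unfolding cS .
    have "(\<Sum>k\<in>S. \<chi> k) \<le> real p * U + \<kappa> * real p * real (d - p)"
      using sumS[OF Ss] 1 2 by linarith
    then show "(\<Sum>k\<in>{d - p<..d}. \<chi> k) \<le> real p * U + \<kappa> * real p * real (d - p)"
      unfolding S_def .
  qed
  have BB: "\<forall>q\<le>d. real q * L - \<kappa> * real q * real (d - q) \<le> (\<Sum>k\<in>{1..q}. \<chi> k)"
  proof (intro allI impI)
    fix q assume qd: "q \<le> d"
    define S where "S = {1..q}"
    have Ss: "S \<subseteq> {1..d}" unfolding S_def using qd by auto
    have cS: "card S = q" unfolding S_def by simp
    have "real (card S) * L \<le> (\<Sum>k\<in>S. w k)" using sum_bounded_below[of S L w] wb unfolding L_def by auto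
    then have 1: "real q * L \<le> (\<Sum>k\<in>S. w k)" unfolding cS .
    have "(\<Sum>k\<in>S. \<Sum>j\<in>{1..d}. - y k j) \<le> \<kappa> * real (card S) * real (d - card S)"
      by (rule cut_upper[OF anti2 yb2 Ss])
    then have 2: "(\<Sum>k\<in>S. \<Sum>j\<in>{1..d}. - y k j) \<le> \<kappa> * real q * real (d - q)" unfolding cS .
    have 3: "(\<Sum>k\<in>S. \<Sum>j\<in>{1..d}. - y k j) = - (\<Sum>k\<in>S. \<Sum>j\<in>{1..d}. y k j)"
      by (simp add: sum_negf)
    have "real q * L - \<kappa> * real q * real (d - q) \<le> (\<Sum>k\<in>S. \<chi> k)"
      using sumS[OF Ss] 1 2 3 by linarith
    then show "real q * L - \<kappa> * real q * real (d - q) \<le> (\<Sum>k\<in>{1..q}. \<chi> k)"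
      unfolding S_def .
  qed
  obtain W where W: "\<forall>k. L \<le> W k \<and> W k \<le> U"
    "\<forall>i j. 1 \<le> i \<longrightarrow> i \<le> j \<longrightarrow> j \<le> d \<longrightarrow> \<chi> i - W i \<le> \<chi> j - W j"
    "(\<Sum>k\<in>{1..d}. \<chi> k - W k) = 0"
    "\<forall>s\<le>d. (\<Sum>k\<in>{d - s<..d}. \<chi> k - W k) \<le> \<kappa> * real s * real (d - s)"
    using part1[OF LU kp sorted TB BB] by blast
  obtain c where c: "\<forall>k\<in>{1..d}. \<chi> k - W k = (\<Sum>j\<in>{1..<k}. c k j) - (\<Sum>i\<in>{Suc k..d}. c i k)"
    "\<forall>i j. 1 \<le> j \<longrightarrow> j < i \<longrightarrow> i \<le> d \<longrightarrow> 0 \<le> c i j \<and> c i j \<le> \<kappa>"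
    using zplus[OF kp, of d "\<lambda>k. \<chi> k - W k"] W(2,3,4) by blast
  have eq: "\<chi> = (\<lambda>k. (\<Sum>i\<in>{1..d}. \<Sum>j\<in>{1..<i}. c i j * (beta i k - beta j k))
                    + (\<Sum>i\<in>{1..d}. W i * beta i k))"
  proof
    fix k show "\<chi> k = (\<Sum>i\<in>{1..d}. \<Sum>j\<in>{1..<i}. c i j * (beta i k - beta j k)) + (\<Sum>i\<in>{1..d}. W i * beta i k)"
    proof (cases "k \<in> {1..d}")
      case True
      have "(\<Sum>i\<in>{1..d}. W i * beta i k) = W k" using beta_sum_delta[of "{1..d}" W k] True by simp
      moreover have "\<chi> k - W k = (\<Sum>j\<in>{1..<k}. c k j) - (\<Sum>i\<in>{Suc k..d}. c i k)"
        using c(1) True by blast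
      ultimately show ?thesis using coord[OF True, of c] by linarith
    next
      case False
      have "(\<Sum>i\<in>{1..d}. W i * beta i k) = (if k \<in> {1..d} then W k else 0)"
        by (rule beta_sum_delta) simp
      also have "\<dots> = 0" using False by (rule if_not_P)
      finally have "(\<Sum>i\<in>{1..d}. W i * beta i k) = 0" .
      then show ?thesis using coord_out[OF False, of c] out False by simp
    qed
  qed
  show ?thesis
    using eq c(2) W(1) unfolding \<kappa>_def L_def U_def by (intro exI[of _ c] exI[of _ W]) auto
qed

end
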